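(* Assume that $a_{j\ell}<a_{\ell\ell}$ and $a_{jj}\le a_{j-1,j}\le\cdots\le a_{1j}$ for all $1\le\ell<j\le n$. Then $Y^{\{n\}}=(0,\dots,0,a_{nn}^{-1})^T$ is a global attractor of the system.
   Context: Fix $n\ge 2$. Consider the Lotka–Volterra system $x_i'=b_ix_i(1-\alpha_ix)$, $i\in\{1,\dots,n\}$, where $b_i>0$, $\alpha_i=(a_{i1},\dots,a_{in})$ with $a_{ii}>0$ and $a_{ij}\ge 0$, considered on $\mathbb{R}^n_+$. An equilibrium $x^*\in\mathbb{R}^n_+$ is a global attractor if every solution with $x(0)\in\operatorname{int}\mathbb{R}^n_+$ satisfies $x(t)\to x^*$. *)

theory Defs
  imports "HOL-Analysis.Analysis"
begin

text \<open>Vectors in R^n are represented as functions nat => real on indices 1..n.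
  The Lotka-Volterra vector field: x_i' = b_i x_i (1 - sum_j a_ij x_j).\<close>

definition LV_field :: "nat \<Rightarrow> (nat \<Rightarrow> real) \<Rightarrow> (nat \<Rightarrow> nat \<Rightarrow> real) \<Rightarrow> (nat \<Rightarrow> real) \<Rightarrow> nat \<Rightarrow> real" where
  "LV_field n b a y i = b i * y i * (1 - (\<Sum>j = 1..n. a i j * y j))"

definition LV_solution :: "nat \<Rightarrow> (nat \<Rightarrow> real) \<Rightarrow> (nat \<Rightarrow> nat \<Rightarrow> real) \<Rightarrow> (real \<Rightarrow> nat \<Rightarrow> real) \<Rightarrow> bool" where
  "LV_solution n b a x \<longleftrightarrow>
     (\<forall>t\<ge>0. \<forall>i\<in>{1..n}.
        ((\<lambda>s. x s i) has_real_derivative LV_field n b a (x t) i) (at t within {0..}))"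

end

theory Submission
  imports Defs
begin

lemma mono_nonpos:
  fixes f f' :: "real \<Rightarrow> real"
  assumes "a \<le> b" "continuous_on {a..b} f"
    "\<And>s. a < s \<Longrightarrow> s < b \<Longrightarrow> (f has_real_derivative f' s) (at s)"
    "\<And>s. a < s \<Longrightarrow> s < b \<Longrightarrow> f' s \<le> 0"
  shows "f b \<le> f a"
proof (cases "a = b")
  case False
  then have ab: "a < b" using assms by simp
  have "\<And>x. a < x \<Longrightarrow> x < b \<Longrightarrow> f differentiable (at x)"
    using assms(3) real_differentiable_def by blast
  from MVT[OF ab assms(2) this] obtain l z where
    z: "a<z" "z<b" "DERIV f z :> l" "f b - f a = (b-a)*l" by blast
  then have "l = f' z" using DERIV_unique assms(3) by blast
  then have "l \<le> 0" using assms(4) z by simp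
  then have "(b-a)*l \<le> 0" using ab by (simp add: mult_nonneg_nonpos)
  then show ?thesis using z by simp
qed simp

lemma stay:
  fixes w w' :: "real \<Rightarrow> real"
  assumes "T \<le> t" "continuous_on {T..t} w"
    "\<And>s. T < s \<Longrightarrow> s < t \<Longrightarrow> (w has_real_derivative w' s) (at s)"
    "\<And>s. T < s \<Longrightarrow> s < t \<Longrightarrow> w s > \<theta> \<Longrightarrow> w' s \<le> 0"
    "w T \<le> \<theta>"
  shows "w t \<le> \<theta>"
proof -
  define A where "A = {s\<in>{T..t}. w s \<le> \<theta>}"
  have A_eq: "A = w -` {..\<theta>} \<inter> {T..t}" unfolding A_def by auto
  have "closed A" unfolding A_eq
    using continuous_on_closed_vimage[of "{T..t}" w] assms(2) by auto
  moreover have "A \<noteq> {}" using assms(1,5) unfolding A_def by auto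
  moreover have bdd: "bdd_above A" unfolding A_def by (rule bdd_aboveI[of _ t]) auto
  ultimately have rA: "Sup A \<in> A" by (rule closed_contains_Sup[rotated 2])
  define r where "r = Sup A"
  have r: "T \<le> r" "r \<le> t" "w r \<le> \<theta>" using rA unfolding r_def A_def by auto
  have above: "w s > \<theta>" if "r < s" "s \<le> t" for s
  proof (rule ccontr)
    assume "\<not> \<theta> < w s"
    then have "s \<in> A" using that r unfolding A_def by auto
    then have "s \<le> r" unfolding r_def using bdd by (rule cSup_upper)
    then show False using that by simp
  qed
  have "w t \<le> w r"
  proof (rule mono_nonpos[where f=w and f'=w'])
    show "continuous_on {r..t} w" using assms(2) by (rule continuous_on_subset) (use r in auto)
    show "\<And>s. r < s \<Longrightarrow> s < t \<Longrightarrow> (w has_real_derivative w' s) (at s)"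
      using assms(3) r by auto
    show "\<And>s. r < s \<Longrightarrow> s < t \<Longrightarrow> w' s \<le> 0"
      using assms(4) r above by auto
  qed (use r in auto)
  then show ?thesis using r by simp
qed

lemma reach:
  fixes w w' :: "real \<Rightarrow> real"
  assumes "T \<le> t" "continuous_on {T..t} w"
    "\<And>s. T < s \<Longrightarrow> s < t \<Longrightarrow> (w has_real_derivative w' s) (at s)"
    "\<And>s. T < s \<Longrightarrow> s < t \<Longrightarrow> w s > \<theta> \<Longrightarrow> w' s \<le> -\<kappa>"
    "\<kappa> > 0" "t \<ge> T + (w T - \<theta>) / \<kappa>"
  shows "w t \<le> \<theta>"
proof (cases "\<exists>s\<in>{T..t}. w s \<le> \<theta>")
  case True
  then obtain s where s: "T \<le> s" "s \<le> t" "w s \<le> \<theta>" by auto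
  show ?thesis
  proof (rule stay[where w=w and w'=w' and T=s])
    show "continuous_on {s..t} w" using assms(2) by (rule continuous_on_subset) (use s in auto)
    show "\<And>u. s < u \<Longrightarrow> u < t \<Longrightarrow> (w has_real_derivative w' u) (at u)"
      using assms(3) s by auto
    show "\<And>u. s < u \<Longrightarrow> u < t \<Longrightarrow> w u > \<theta> \<Longrightarrow> w' u \<le> 0"
      proof -
      fix u assume u: "s < u" "u < t" "w u > \<theta>"
      have "w' u \<le> -\<kappa>" using assms(4)[of u] u s by simp
      then show "w' u \<le> 0" using assms(5) by simp
    qed
  qed (use s in auto)
next
  case False
  have "(\<lambda>s. w s + \<kappa> * s) t \<le> (\<lambda>s. w s + \<kappa> * s) T"
  proof (rule mono_nonpos[where f="\<lambda>s. w s + \<kappa> * s" and f'="\<lambda>s. w' s + \<kappa>"])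
    show "continuous_on {T..t} (\<lambda>s. w s + \<kappa> * s)"
      using assms(2) by (intro continuous_intros)
    show "\<And>s. T < s \<Longrightarrow> s < t \<Longrightarrow> ((\<lambda>s. w s + \<kappa> * s) has_real_derivative w' s + \<kappa>) (at s)"
      using assms(3) by (auto intro!: derivative_eq_intros)
    show "\<And>s. T < s \<Longrightarrow> s < t \<Longrightarrow> w' s + \<kappa> \<le> 0"
    proof -
      fix s assume s: "T < s" "s < t"
      then have "w s > \<theta>" using False by (metis atLeastAtMost_iff less_imp_le not_le)
      then have "w' s \<le> -\<kappa>" using assms(4) s by simp
      then show "w' s + \<kappa> \<le> 0" by simp
    qed
  qed (use assms in auto)
  then have "w t \<le> w T - \<kappa> * (t - T)" by (simp add: algebra_simps)
  moreover have "\<kappa> * (t - T) \<ge> w T - \<theta>"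
    using assms(5,6) by (simp add: field_simps)
  ultimately show ?thesis by simp
qed


locale LVsys =
  fixes n :: nat and b :: "nat \<Rightarrow> real" and a :: "nat \<Rightarrow> nat \<Rightarrow> real" and x :: "real \<Rightarrow> nat \<Rightarrow> real"
  assumes n2: "n \<ge> 2"
    and b_pos: "\<forall>i\<in>{1..n}. b i > 0"
    and a_diag: "\<forall>i\<in>{1..n}. a i i > 0"
    and a_nonneg: "\<forall>i\<in>{1..n}. \<forall>j\<in>{1..n}. a i j \<ge> 0"
    and h1: "\<forall>l j. 1 \<le> l \<and> l < j \<and> j \<le> n \<longrightarrow> a j l < a l l"
    and h2: "\<forall>i j. 1 \<le> i \<and> i < j \<and> j \<le> n \<longrightarrow> a (i + 1) j \<le> a i j"
    and sol: "LV_solution n b a x"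
    and init: "\<forall>i\<in>{1..n}. x 0 i > 0"
begin

definition G :: "real \<Rightarrow> nat \<Rightarrow> real" where
  "G t i = b i * x t i * (1 - (\<Sum>j = 1..n. a i j * x t j))"

lemma deriv_within: "t \<ge> 0 \<Longrightarrow> i \<in> {1..n} \<Longrightarrow>
   ((\<lambda>s. x s i) has_real_derivative G t i) (at t within {0..})"
  using sol unfolding LV_solution_def LV_field_def G_def by blast

lemma deriv: "t > 0 \<Longrightarrow> i \<in> {1..n} \<Longrightarrow> ((\<lambda>s. x s i) has_real_derivative G t i) (at t)"
proof -
  assume t: "t > 0" and i: "i \<in> {1..n}"
  have "t \<in> interior {0::real..}" using t by simp
  then have "at t within {0..} = at t" by (rule at_within_interior)
  then show ?thesis using deriv_within[of t i] t i by simp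
qed

lemma cont: "i \<in> {1..n} \<Longrightarrow> continuous_on {0..} (\<lambda>s. x s i)"
  unfolding continuous_on_eq_continuous_within
  using deriv_within DERIV_continuous by (metis atLeast_iff)

lemma cont_sub: "i \<in> {1..n} \<Longrightarrow> 0 \<le> u \<Longrightarrow> continuous_on {u..v} (\<lambda>s. x s i)"
  using cont by (rule continuous_on_subset) auto

lemma pos: "t \<ge> 0 \<Longrightarrow> i \<in> {1..n} \<Longrightarrow> x t i > 0"
proof (rule ccontr)
  assume t1: "t \<ge> 0" and i: "i \<in> {1..n}" and neg: "\<not> x t i > 0"
  define Z where "Z = {s\<in>{0..t}. x s i \<le> 0}"
  have Z_eq: "Z = (\<lambda>s. x s i) -` {..0} \<inter> {0..t}" unfolding Z_def by auto
  have "closed Z" unfolding Z_eq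
    using continuous_on_closed_vimage[of "{0..t}" "\<lambda>s. x s i"] cont_sub[OF i, of 0 t] by auto
  moreover have "Z \<noteq> {}" using t1 neg unfolding Z_def by auto
  moreover have "bdd_below Z" unfolding Z_def by (rule bdd_belowI[of _ 0]) auto
  ultimately have "Inf Z \<in> Z" by (rule closed_contains_Inf[rotated 2])
  define t0 where "t0 = Inf Z"
  have t0Z: "t0 \<in> Z" using \<open>Inf Z \<in> Z\<close> t0_def by simp
  have t0: "0 \<le> t0" "x t0 i \<le> 0" using t0Z unfolding Z_def by auto
  have "t0 \<noteq> 0"
  proof
    assume "t0 = 0"
    then have "x 0 i \<le> 0" using t0 by simp
    moreover have "x 0 i > 0" using init i by blast
    ultimately show False by simp
  qed
  then have t0p: "t0 > 0" using t0 by simp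
  have before: "x s i > 0" if "0 \<le> s" "s < t0" for s
  proof (rule ccontr)
    assume "\<not> x s i > 0"
    then have "s \<in> Z" using that t0Z unfolding Z_def by auto
    then have "t0 \<le> s" unfolding t0_def using \<open>bdd_below Z\<close> by (rule cInf_lower)
    then show False using that by simp
  qed
  define h where "h s = b i * (1 - (\<Sum>j = 1..n. a i j * x s j))" for s
  have "continuous_on {0..t0} h" unfolding h_def
    by (intro continuous_intros cont_sub) auto
  then have "compact (h ` {0..t0})" by (rule compact_continuous_image) simp
  then obtain M where M: "\<And>y. y \<in> h ` {0..t0} \<Longrightarrow> norm y \<le> M"
    using compact_imp_bounded bounded_iff by metis
  have M0: "M \<ge> 0" using M[of "h 0"] t0p by force
  have lowb: "ln (x s i) \<ge> ln (x 0 i) - M * s" if s: "0 \<le> s" "s < t0" for s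
  proof -
    have "(\<lambda>u. - ln (x u i) - M * u) s \<le> (\<lambda>u. - ln (x u i) - M * u) 0"
    proof (rule mono_nonpos[where f="\<lambda>u. - ln (x u i) - M * u" and f'="\<lambda>u. - h u - M"])
      show "continuous_on {0..s} (\<lambda>u. - ln (x u i) - M * u)"
      proof -
        have "\<forall>u\<in>{0..s}. x u i > 0" using before s by auto
        then show ?thesis by (intro continuous_intros cont_sub i) auto
      qed
      fix u assume u: "0 < u" "u < s"
      have xu: "x u i > 0" using before u s by auto
      have "((\<lambda>u. - ln (x u i) - M * u) has_real_derivative
             - (G u i / x u i) - M) (at u)"
        using deriv[OF u(1) i] xu by (auto intro!: derivative_eq_intros)
      moreover have "G u i / x u i = h u" unfolding G_def h_def using xu by simp
      ultimately show "((\<lambda>u. - ln (x u i) - M * u) has_real_derivative - h u - M) (at u)"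
        by simp
      have "norm (h u) \<le> M" using M u s by auto
      then show "- h u - M \<le> 0" by simp
    qed (use s in auto)
    then show ?thesis by simp
  qed
  define c where "c = exp (ln (x 0 i) - M * t0)"
  have c0: "c > 0" unfolding c_def by simp
  have lowc: "x s i \<ge> c" if "0 \<le> s" "s < t0" for s
  proof -
    have "ln (x 0 i) - M * t0 \<le> ln (x s i)"
      using lowb[OF that] M0 that by (smt (verit) mult_left_mono)
    then have "c \<le> exp (ln (x s i))" unfolding c_def by simp
    then show ?thesis using before[OF that] by simp
  qed
  define C where "C = {s\<in>{0..t0}. x s i \<ge> c}"
  have C_eq: "C = (\<lambda>s. x s i) -` {c..} \<inter> {0..t0}" unfolding C_def by auto
  have "closed C" unfolding C_eq
    using continuous_on_closed_vimage[of "{0..t0}" "\<lambda>s. x s i"] cont_sub[OF i, of 0 t0] by auto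
  moreover have "{0..<t0} \<subseteq> C" unfolding C_def using lowc by auto
  ultimately have "closure {0..<t0} \<subseteq> C" using closure_minimal by blast
  then have "t0 \<in> C" using t0p by auto
  then have "x t0 i \<ge> c" unfolding C_def by auto
  then show False using c0 t0 by simp
qed

lemma sum_ge_term: "i \<in> {1..n} \<Longrightarrow> t \<ge> 0 \<Longrightarrow> (\<Sum>j = 1..n. a i j * x t j) \<ge> a i i * x t i"
proof -
  assume i: "i \<in> {1..n}" and t: "t \<ge> 0"
  show ?thesis
  proof (rule member_le_sum[of i "{1..n}" "\<lambda>j. a i j * x t j"])
    fix j assume j: "j \<in> {1..n} - {i}"
    have "a i j \<ge> 0" using a_nonneg i j by auto
    moreover have "x t j > 0" using pos[of t j] t j by auto
    ultimately show "0 \<le> a i j * x t j" by simp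
  qed (use i in auto)
qed

definition B :: "nat \<Rightarrow> real" where "B i = max (x 0 i) (1 / a i i)"

lemma ub: "t \<ge> 0 \<Longrightarrow> i \<in> {1..n} \<Longrightarrow> x t i \<le> B i"
proof -
  assume t: "t \<ge> 0" and i: "i \<in> {1..n}"
  show ?thesis
  proof (rule stay[where w="\<lambda>s. x s i" and w'="\<lambda>s. G s i" and T=0])
    show "continuous_on {0..t} (\<lambda>s. x s i)" using cont_sub i by auto
    show "\<And>s. 0 < s \<Longrightarrow> s < t \<Longrightarrow> ((\<lambda>s. x s i) has_real_derivative G s i) (at s)"
      using deriv i by auto
    fix s assume s: "0 < s" "s < t" "x s i > B i"
    have aii: "a i i > 0" using a_diag i by auto
    have "x s i > 1 / a i i" using s unfolding B_def by simp
    then have "a i i * x s i > 1" using aii by (simp add: field_simps)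
    then have "(\<Sum>j = 1..n. a i j * x t j) \<ge> 0 \<Longrightarrow> True" by simp
    have "(\<Sum>j = 1..n. a i j * x s j) > 1" using sum_ge_term[OF i, of s] s \<open>a i i * x s i > 1\<close> by simp
    moreover have "b i * x s i > 0" using b_pos pos[of s i] i s by auto
    ultimately show "G s i \<le> 0" unfolding G_def by (simp add: mult_nonneg_nonpos)
  qed (use t B_def in auto)
qed

definition K :: real where "K = (\<Sum>i = 1..n. B i)"

lemma B_pos: "i \<in> {1..n} \<Longrightarrow> B i > 0"
  unfolding B_def using init by (simp add: less_max_iff_disj)

lemma ubK: "t \<ge> 0 \<Longrightarrow> i \<in> {1..n} \<Longrightarrow> x t i \<le> K"
proof -
  assume t: "t \<ge> 0" and i: "i \<in> {1..n}"
  have "B i \<le> K" unfolding K_def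
    by (rule member_le_sum) (use i B_pos in \<open>auto intro: less_imp_le\<close>)
  then show ?thesis using ub[OF t i] by simp
qed

lemma K_pos: "K > 0" using ubK[of 0 1] pos[of 0 1] n2 by simp

end
context LVsys begin

definition Amax :: real where "Amax = (\<Sum>i = 1..n. \<Sum>j = 1..n. a i j)"

lemma a_le_Amax: "i \<in> {1..n} \<Longrightarrow> j \<in> {1..n} \<Longrightarrow> a i j \<le> Amax"
proof -
  assume i: "i \<in> {1..n}" and j: "j \<in> {1..n}"
  have "a i j \<le> (\<Sum>j = 1..n. a i j)"
    by (rule member_le_sum) (use j a_nonneg i in auto)
  also have "\<dots> \<le> Amax" unfolding Amax_def
    by (rule member_le_sum[of i "{1..n}" "\<lambda>i. \<Sum>j = 1..n. a i j"])
       (use i a_nonneg in \<open>auto intro: sum_nonneg\<close>)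
  finally show ?thesis .
qed

lemma Amax_pos: "Amax > 0"
  using a_le_Amax[of 1 1] a_diag n2 by force

lemma chain_aux: "1 \<le> l \<Longrightarrow> l + d = k \<Longrightarrow> k \<le> n \<Longrightarrow> a k k \<le> a l k"
proof (induction d arbitrary: l)
  case 0 then show ?case by simp
next
  case (Suc d)
  have "a k k \<le> a (l+1) k" using Suc.IH[of "l+1"] Suc.prems by simp
  moreover have "a (l+1) k \<le> a l k" using h2 Suc.prems by simp
  ultimately show ?case by simp
qed

lemma chain: "1 \<le> l \<Longrightarrow> l \<le> k \<Longrightarrow> k \<le> n \<Longrightarrow> a k k \<le> a l k"
  using chain_aux[of l "k - l" k] by simp

definition gam :: real where "gam = Min ((\<lambda>k. a k k - a n k) ` {1..<n})"

lemma gam_pos: "gam > 0"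
proof -
  have "{1..<n} \<noteq> {}" using n2 by auto
  then have "gam \<in> (\<lambda>k. a k k - a n k) ` {1..<n}" unfolding gam_def
    by (intro Min_in) auto
  then obtain k where k: "k \<in> {1..<n}" "gam = a k k - a n k" by auto
  then show ?thesis using h1 by auto
qed

lemma gam_le: "k \<in> {1..<n} \<Longrightarrow> gam \<le> a k k - a n k"
  unfolding gam_def by (rule Min_le) auto

lemma split_sum: "1 \<le> l \<Longrightarrow> l \<le> n \<Longrightarrow> (\<Sum>j = 1..n. f j) = (\<Sum>j\<in>{1..<l}. f j) + (\<Sum>j = l..n. f (j::nat))"
proof -
  assume l: "1 \<le> l" "l \<le> n"
  have "{1..n} = {1..<l} \<union> {l..n}" using l by auto
  moreover have "sum f ({1..<l} \<union> {l..n}) = sum f {1..<l} + sum f {l..n}"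
    by (rule sum.union_disjoint) auto
  ultimately show ?thesis by simp
qed

lemma split_last: "l \<le> n \<Longrightarrow> (\<Sum>j = l..n. f j) = (\<Sum>j\<in>{l..<n}. f j) + f (n::nat)"
proof -
  assume l: "l \<le> n"
  have "{l..n} = insert n {l..<n}" using l by auto
  then show ?thesis by (simp add: add.commute)
qed

lemma lin_bound: "k \<in> {1..n} \<Longrightarrow> s \<ge> 0 \<Longrightarrow>
  (\<Sum>j = 1..n. a k j * x s j) \<le> Amax * (\<Sum>j = 1..n. x s j)"
  unfolding sum_distrib_left
  by (rule sum_mono, rule mult_right_mono) (use a_le_Amax pos in \<open>auto intro: less_imp_le\<close>)

lemma persist:
  assumes l: "1 \<le> l" "l \<le> n" and IH: "\<forall>k\<in>{1..<l}. ((\<lambda>t. x t k) \<longlongrightarrow> 0) at_top"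
  shows "\<exists>\<sigma>>0. \<exists>T>0. \<forall>t\<ge>T. (\<Sum>k = l..n. x t k) \<ge> \<sigma>"
proof -
  define E where "E t = (\<Sum>k\<in>{1..<l}. x t k)" for t
  have "(E \<longlongrightarrow> 0) at_top" unfolding E_def by (rule tendsto_null_sum) (use IH in auto)
  then have "eventually (\<lambda>t. E t < 1/(4*Amax)) at_top"
    using Amax_pos by (intro order_tendstoD(2)) auto
  then obtain T0 where T0: "\<And>t. t \<ge> T0 \<Longrightarrow> E t < 1/(4*Amax)"
    by (auto simp: eventually_at_top_linorder)
  define T1 where "T1 = max T0 1"
  define S where "S t = (\<Sum>k = l..n. x t k)" for t
  have Spos: "S t > 0" if "t \<ge> 0" for t
    unfolding S_def by (rule sum_pos) (use l pos that in auto)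
  define \<sigma> where "\<sigma> = min (S T1) (1/(4*Amax))"
  have \<sigma>pos: "\<sigma> > 0" unfolding \<sigma>_def using Spos[of T1] Amax_pos T1_def by auto
  have "S t \<ge> \<sigma>" if t: "t \<ge> T1" for t
  proof -
    have "(\<lambda>s. - S s) t \<le> - \<sigma>"
    proof (rule stay[where w="\<lambda>s. - S s" and w'="\<lambda>s. - (\<Sum>k = l..n. G s k)" and T=T1])
      show "continuous_on {T1..t} (\<lambda>s. - S s)" unfolding S_def
        by (intro continuous_intros cont_sub) (use l T1_def in auto)
      show "((\<lambda>s. - S s) has_real_derivative - (\<Sum>k = l..n. G s k)) (at s)"
        if "T1 < s" "s < t" for s unfolding S_def
        using that T1_def l by (auto intro!: derivative_eq_intros deriv)
      fix s assume s: "T1 < s" "s < t" "- S s > - \<sigma>"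
      have s0: "s \<ge> 0" using s T1_def by auto
      have Ss: "S s < 1/(4*Amax)" using s \<sigma>_def by auto
      have Es: "E s < 1/(4*Amax)" using T0 s T1_def by auto
      have "G s k \<ge> 0" if k: "k \<in> {l..n}" for k
      proof -
        have k1: "k \<in> {1..n}" using k l by auto
        have "(\<Sum>j = 1..n. a k j * x s j) \<le> Amax * (\<Sum>j = 1..n. x s j)"
          by (rule lin_bound[OF k1 s0])
        also have "\<dots> = Amax * E s + Amax * S s"
          unfolding E_def S_def using split_sum[OF l, of "x s"] by (simp add: distrib_left)
        also have "\<dots> \<le> 1/2"
        proof -
          have "Amax * E s \<le> 1/4" using Es Amax_pos by (simp add: field_simps)
          moreover have "Amax * S s \<le> 1/4" using Ss Amax_pos by (simp add: field_simps)
          ultimately show ?thesis by simp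
        qed
        finally have "1 - (\<Sum>j = 1..n. a k j * x s j) \<ge> 0" by simp
        moreover have "b k * x s k \<ge> 0" using b_pos pos[OF s0 k1] k1
          by (simp add: less_imp_le)
        ultimately show ?thesis unfolding G_def by simp
      qed
      then have "(\<Sum>k = l..n. G s k) \<ge> 0" by (intro sum_nonneg) auto
      then show "- (\<Sum>k = l..n. G s k) \<le> 0" by simp
    qed (use t \<sigma>_def in auto)
    then show ?thesis by simp
  qed
  then show ?thesis unfolding S_def using \<sigma>pos T1_def
    by (intro exI[of _ \<sigma>] conjI exI[of _ T1]) auto
qed

end
context LVsys begin

lemma step:
  assumes l: "1 \<le> l" "l < n" and IH: "\<forall>k\<in>{1..<l}. ((\<lambda>t. x t k) \<longlongrightarrow> 0) at_top"
  shows "((\<lambda>t. x t l) \<longlongrightarrow> 0) at_top"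
proof -
  obtain \<sigma> T1 where \<sigma>: "\<sigma> > 0" "T1 > 0" and \<sigma>T: "\<And>t. t \<ge> T1 \<Longrightarrow> (\<Sum>k = l..n. x t k) \<ge> \<sigma>"
    using persist[of l] l IH by force
  define E where "E t = (\<Sum>k\<in>{1..<l}. Amax * x t k)" for t
  have E0: "(E \<longlongrightarrow> 0) at_top" unfolding E_def
    by (intro tendsto_null_sum tendsto_mult_right_zero) (use IH in auto)
  have l1: "l \<in> {1..n}" and n1: "n \<in> {1..n}" using l by auto
  define \<beta> where "\<beta> = b l / b n"
  have bl: "b l > 0" and bn: "b n > 0" using b_pos l1 n1 by auto
  then have \<beta>: "\<beta> > 0" unfolding \<beta>_def by simp
  define w where "w t = ln (x t l) - \<beta> * ln (x t n)" for t
  define w' where "w' t = b l * (\<Sum>k = 1..n. (a n k - a l k) * x t k)" for t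
  have wd: "(w has_real_derivative w' t) (at t)" if t: "t > 0" for t
  proof -
    have xl: "x t l > 0" and xn: "x t n > 0" using pos t l1 n1 by auto
    have "(w has_real_derivative (G t l / x t l - \<beta> * (G t n / x t n))) (at t)"
      unfolding w_def using xl xn deriv[OF t l1] deriv[OF t n1]
      by (auto intro!: derivative_eq_intros)
    moreover have "G t l / x t l - \<beta> * (G t n / x t n) = w' t"
    proof -
      have "G t l / x t l = b l * (1 - (\<Sum>j = 1..n. a l j * x t j))"
        unfolding G_def using xl by simp
      moreover have "\<beta> * (G t n / x t n) = b l * (1 - (\<Sum>j = 1..n. a n j * x t j))"
        unfolding G_def \<beta>_def using xn bn by simp
      ultimately show ?thesis unfolding w'_def
        by (simp add: left_diff_distrib sum_subtractf right_diff_distrib)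
    qed
    ultimately show ?thesis by simp
  qed
  have wc: "continuous_on {u..v} w" if "u > 0" for u v
  proof (intro continuous_at_imp_continuous_on ballI)
    fix s assume "s \<in> {u..v}"
    then have "s > 0" using that by auto
    then show "isCont w s" using wd[of s] DERIV_isCont by blast
  qed
  have bound: "(\<Sum>k = 1..n. (a n k - a l k) * x t k) \<le> E t - gam * (\<Sum>k\<in>{l..<n}. x t k)"
    if t: "t \<ge> 0" for t
  proof -
    have "(\<Sum>k = 1..n. (a n k - a l k) * x t k) =
      (\<Sum>k\<in>{1..<l}. (a n k - a l k) * x t k) + (\<Sum>k\<in>{l..<n}. (a n k - a l k) * x t k)
       + (a n n - a l n) * x t n"
      using split_sum[of l "\<lambda>k. (a n k - a l k) * x t k"] split_last[of l "\<lambda>k. (a n k - a l k) * x t k"] l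
      by simp
    also have "\<dots> \<le> E t + (\<Sum>k\<in>{l..<n}. (- gam) * x t k) + 0"
    proof (intro add_mono)
      show "(\<Sum>k\<in>{1..<l}. (a n k - a l k) * x t k) \<le> E t" unfolding E_def
      proof (rule sum_mono)
        fix k assume k: "k \<in> {1..<l}"
        have k1: "k \<in> {1..n}" using k l by auto
        have "a n k - a l k \<le> Amax" using a_le_Amax[OF n1 k1] a_nonneg l1 k1 by force
        then show "(a n k - a l k) * x t k \<le> Amax * x t k"
          using pos[OF t k1] by (intro mult_right_mono) auto
      qed
      show "(\<Sum>k\<in>{l..<n}. (a n k - a l k) * x t k) \<le> (\<Sum>k\<in>{l..<n}. (- gam) * x t k)"
      proof (rule sum_mono)
        fix k assume k: "k \<in> {l..<n}"
        have k1: "k \<in> {1..n}" and k2: "k \<in> {1..<n}" using k l by auto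
        have "a k k \<le> a l k" using chain[of l k] k l by auto
        then have "a n k - a l k \<le> - gam" using gam_le[OF k2] by simp
        then show "(a n k - a l k) * x t k \<le> (- gam) * x t k"
          using pos[OF t k1] by (intro mult_right_mono) auto
      qed
      have "a n n \<le> a l n" using chain[of l n] l by auto
      then show "(a n n - a l n) * x t n \<le> 0"
        using pos[OF t n1] by (simp add: mult_nonpos_nonneg)
    qed
    finally show ?thesis by (simp add: sum_distrib_left sum_negf)
  qed
  have claim: "\<exists>T. \<forall>t\<ge>T. w t \<le> \<theta>" for \<theta>
  proof -
    define \<rho> where "\<rho> = min (\<sigma>/2) (exp (\<theta> + \<beta> * ln (\<sigma>/2)))"
    have \<rho>: "\<rho> > 0" unfolding \<rho>_def using \<sigma> by simp
    have "eventually (\<lambda>t. E t < gam * \<rho> / 2) at_top"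
      using gam_pos \<rho> by (intro order_tendstoD(2)[OF E0]) auto
    then obtain T0 where T0: "\<And>t. t \<ge> T0 \<Longrightarrow> E t < gam * \<rho> / 2"
      by (auto simp: eventually_at_top_linorder)
    define T2 where "T2 = max T0 T1"
    have T2: "T2 > 0" "T2 \<ge> T0" "T2 \<ge> T1" unfolding T2_def using \<sigma> by auto
    define \<kappa> where "\<kappa> = b l * gam * \<rho> / 2"
    have \<kappa>: "\<kappa> > 0" unfolding \<kappa>_def using bl gam_pos \<rho> by simp
    have key: "w' s \<le> - \<kappa>" if s: "T2 < s" "w s > \<theta>" for s
    proof -
      have s0: "s \<ge> 0" using s T2 by auto
      define P where "P = (\<Sum>k\<in>{l..<n}. x s k)"
      have SP: "P + x s n \<ge> \<sigma>" using \<sigma>T[of s] s T2 split_last[of l "x s"] l unfolding P_def by simp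
      have Pxl: "P \<ge> x s l" unfolding P_def
        by (rule member_le_sum) (use l pos s0 in \<open>auto intro: less_imp_le\<close>)
      have "P \<ge> \<rho>"
      proof (cases "P \<ge> \<sigma>/2")
        case True then show ?thesis unfolding \<rho>_def by simp
      next
        case False
        then have xn: "x s n \<ge> \<sigma>/2" using SP by simp
        then have "ln (x s n) \<ge> ln (\<sigma>/2)" using \<sigma> by simp
        then have "\<beta> * ln (x s n) \<ge> \<beta> * ln (\<sigma>/2)" using \<beta> by (simp add: mult_left_mono)
        then have "ln (x s l) > \<theta> + \<beta> * ln (\<sigma>/2)" using s(2) unfolding w_def by simp
        then have "exp (ln (x s l)) > exp (\<theta> + \<beta> * ln (\<sigma>/2))" by simp
        then have "x s l > exp (\<theta> + \<beta> * ln (\<sigma>/2))" using pos[OF s0 l1] by simp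
        then show ?thesis using Pxl unfolding \<rho>_def by simp
      qed
      have "(\<Sum>k = 1..n. (a n k - a l k) * x s k) \<le> E s - gam * P"
        using bound[OF s0] unfolding P_def .
      also have "\<dots> \<le> gam * \<rho> / 2 - gam * \<rho>"
        using T0[of s] s T2 \<open>P \<ge> \<rho>\<close> gam_pos by (smt (verit) mult_left_mono)
      finally have "(\<Sum>k = 1..n. (a n k - a l k) * x s k) \<le> - (gam * \<rho> / 2)" by (simp add: mult.commute)
      then have "w' s \<le> b l * (- (gam * \<rho> / 2))" unfolding w'_def
        using bl by (intro mult_left_mono) auto
      then show ?thesis unfolding \<kappa>_def by simp
    qed
    have "w t \<le> \<theta>" if t: "t \<ge> T2 + max 0 ((w T2 - \<theta>) / \<kappa>)" for t
    proof (rule reach[where w=w and w'=w' and T=T2 and \<kappa>=\<kappa>])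
      show "T2 \<le> t" using t by simp
      show "continuous_on {T2..t} w" using wc T2 by simp
      show "\<And>s. T2 < s \<Longrightarrow> s < t \<Longrightarrow> (w has_real_derivative w' s) (at s)"
        using wd T2 by simp
      show "\<And>s. T2 < s \<Longrightarrow> s < t \<Longrightarrow> w s > \<theta> \<Longrightarrow> w' s \<le> -\<kappa>" using key by simp
      show "t \<ge> T2 + (w T2 - \<theta>) / \<kappa>" using t by simp
    qed (use \<kappa> in simp)
    then show ?thesis by blast
  qed
  show ?thesis unfolding tendsto_iff
  proof (intro allI impI)
    fix e :: real assume e: "e > 0"
    define \<theta> where "\<theta> = ln (e/2) - \<beta> * ln K"
    obtain T where T: "\<And>t. t \<ge> T \<Longrightarrow> w t \<le> \<theta>" using claim[of \<theta>] by blast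
    have "dist (x t l) 0 < e" if t: "t \<ge> max T 0" for t
    proof -
      have t0: "t \<ge> 0" using t by simp
      have xl: "x t l > 0" and xn: "x t n > 0" using pos t0 l1 n1 by auto
      have "ln (x t n) \<le> ln K" using ubK[OF t0 n1] xn by simp
      then have "\<beta> * ln (x t n) \<le> \<beta> * ln K" using \<beta> by (simp add: mult_left_mono)
      then have "ln (x t l) \<le> ln (e/2)" using T[of t] t unfolding w_def \<theta>_def by simp
      then have "x t l \<le> e/2" using xl e by simp
      then show ?thesis using xl e by simp
    qed
    then show "eventually (\<lambda>t. dist (x t l) 0 < e) at_top"
      unfolding eventually_at_top_linorder by blast
  qed
qed

end
context LVsys begin

lemma final:
  assumes IH: "\<forall>k\<in>{1..<n}. ((\<lambda>t. x t k) \<longlongrightarrow> 0) at_top"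
  shows "((\<lambda>t. x t n) \<longlongrightarrow> 1 / a n n) at_top"
proof -
  have n1: "n \<in> {1..n}" using n2 by auto
  obtain \<sigma> T1 where \<sigma>: "\<sigma> > 0" "T1 > 0" and \<sigma>T: "\<And>t. t \<ge> T1 \<Longrightarrow> x t n \<ge> \<sigma>"
    using persist[of n] n2 IH by force
  define E where "E t = (\<Sum>k\<in>{1..<n}. a n k * x t k)" for t
  have E0: "(E \<longlongrightarrow> 0) at_top" unfolding E_def
    by (intro tendsto_null_sum tendsto_mult_right_zero) (use IH in auto)
  define \<alpha> where "\<alpha> = a n n"
  have \<alpha>: "\<alpha> > 0" unfolding \<alpha>_def using a_diag n1 by auto
  have bn: "b n > 0" using b_pos n1 by auto
  have Eged: "E t \<ge> 0" if "t \<ge> 0" for t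
    unfolding E_def using a_nonneg pos that n1
    by (intro sum_nonneg mult_nonneg_nonneg) (auto intro: less_imp_le)
  have Gform: "G t n = b n * x t n * (1 - \<alpha> * x t n - E t)" for t
  proof -
    have "(\<Sum>j = 1..n. a n j * x t j) = E t + \<alpha> * x t n"
      unfolding E_def \<alpha>_def using split_sum[of n "\<lambda>j. a n j * x t j"] n2 by simp
    then show ?thesis unfolding G_def by (simp add: algebra_simps)
  qed
  show ?thesis unfolding tendsto_iff
  proof (intro allI impI)
    fix e :: real assume e: "e > 0"
    define d where "d = e / 2"
    have d: "d > 0" unfolding d_def using e by simp
    define \<kappa> where "\<kappa> = b n * \<sigma> * (\<alpha> * d / 2)"
    have \<kappa>: "\<kappa> > 0" unfolding \<kappa>_def using bn \<sigma> \<alpha> d by simp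
    have "eventually (\<lambda>t. E t < \<alpha> * d / 2) at_top"
      using \<alpha> d by (intro order_tendstoD(2)[OF E0]) auto
    then obtain T0 where T0: "\<And>t. t \<ge> T0 \<Longrightarrow> E t < \<alpha> * d / 2"
      by (auto simp: eventually_at_top_linorder)
    define T2 where "T2 = max T0 T1"
    have T2: "T2 > 0" "T2 \<ge> T0" "T2 \<ge> T1" unfolding T2_def using \<sigma> by auto
    have contn: "continuous_on {T2..t} (\<lambda>s. x s n)" for t using cont_sub n1 T2 by auto
    have up: "x t n \<le> 1/\<alpha> + d" if t: "t \<ge> T2 + max 0 ((x T2 n - (1/\<alpha> + d)) / \<kappa>)" for t
    proof (rule reach[where w="\<lambda>s. x s n" and w'="\<lambda>s. G s n" and T=T2 and \<kappa>=\<kappa>])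
      show "\<And>s. T2 < s \<Longrightarrow> s < t \<Longrightarrow> ((\<lambda>s. x s n) has_real_derivative G s n) (at s)"
        using deriv n1 T2 by auto
      fix s assume s: "T2 < s" "s < t" "x s n > 1/\<alpha> + d"
      have s0: "s \<ge> 0" using s T2 by auto
      have xs: "x s n \<ge> \<sigma>" using \<sigma>T[of s] s T2 by simp
      have "\<alpha> * x s n > \<alpha> * (1/\<alpha> + d)" using s \<alpha> by simp
      then have "\<alpha> * x s n > 1 + \<alpha> * d" using \<alpha> by (simp add: distrib_left)
      then have y: "1 - \<alpha> * x s n - E s \<le> - (\<alpha> * d)" using Eged[OF s0] by simp
      have "G s n \<le> b n * x s n * (- (\<alpha> * d))" unfolding Gform
        using y bn pos[OF s0 n1] by (intro mult_left_mono) auto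
      also have "\<dots> \<le> b n * \<sigma> * (- (\<alpha> * d))"
        using xs bn \<alpha> d by (intro mult_right_mono_neg mult_left_mono) auto
      also have "\<dots> \<le> - \<kappa>" unfolding \<kappa>_def using bn \<sigma> \<alpha> d
        by (simp add: mult_pos_pos)
      finally show "G s n \<le> - \<kappa>" .
    qed (use t contn \<kappa> in auto)
    have lo: "- x t n \<le> - (1/\<alpha> - d)" if t: "t \<ge> T2 + max 0 ((- x T2 n - (- (1/\<alpha> - d))) / \<kappa>)" for t
    proof (rule reach[where w="\<lambda>s. - x s n" and w'="\<lambda>s. - G s n" and T=T2 and \<kappa>=\<kappa>])
      show "\<And>s. T2 < s \<Longrightarrow> s < t \<Longrightarrow> ((\<lambda>s. - x s n) has_real_derivative - G s n) (at s)"
        using deriv n1 T2 by (auto intro!: derivative_eq_intros)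
      show "continuous_on {T2..t} (\<lambda>s. - x s n)" using contn by (intro continuous_intros)
      fix s assume s: "T2 < s" "s < t" "- x s n > - (1/\<alpha> - d)"
      have s0: "s \<ge> 0" using s T2 by auto
      have xs: "x s n \<ge> \<sigma>" using \<sigma>T[of s] s T2 by simp
      have "\<alpha> * x s n < \<alpha> * (1/\<alpha> - d)" using s \<alpha> by simp
      then have "\<alpha> * x s n < 1 - \<alpha> * d" using \<alpha> by (simp add: right_diff_distrib)
      moreover have "E s < \<alpha> * d / 2" using T0[of s] s T2 by simp
      ultimately have y: "1 - \<alpha> * x s n - E s \<ge> \<alpha> * d / 2" by simp
      have "b n * \<sigma> * (\<alpha> * d / 2) \<le> b n * x s n * (\<alpha> * d / 2)"
        using xs bn \<alpha> d by (intro mult_right_mono mult_left_mono) auto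
      also have "\<dots> \<le> G s n" unfolding Gform
        using y bn pos[OF s0 n1] by (intro mult_left_mono) auto
      finally show "- G s n \<le> - \<kappa>" unfolding \<kappa>_def by simp
    qed (use t \<kappa> in auto)
    define T3 where "T3 = max (T2 + max 0 ((x T2 n - (1/\<alpha> + d)) / \<kappa>))
                            (T2 + max 0 ((- x T2 n - (- (1/\<alpha> - d))) / \<kappa>))"
    have "dist (x t n) (1 / a n n) < e" if "t \<ge> T3" for t
    proof -
      have "x t n \<le> 1/\<alpha> + d" using up that T3_def by simp
      moreover have "x t n \<ge> 1/\<alpha> - d" using lo[of t] that T3_def by simp
      ultimately have "\<bar>x t n - 1/\<alpha>\<bar> \<le> d" by simp
      then show ?thesis unfolding dist_real_def \<alpha>_def d_def using e by simp
    qed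
    then show "eventually (\<lambda>t. dist (x t n) (1 / a n n) < e) at_top"
      unfolding eventually_at_top_linorder by blast
  qed
qed

lemma all_zero: "1 \<le> l \<Longrightarrow> l < n \<Longrightarrow> ((\<lambda>t. x t l) \<longlongrightarrow> 0) at_top"
proof (induction l rule: less_induct)
  case (less l)
  show ?case by (rule step) (use less in auto)
qed

theorem main: "\<forall>i\<in>{1..n}. ((\<lambda>t. x t i) \<longlongrightarrow> (if i = n then 1 / a n n else 0)) at_top"
proof
  fix i assume i: "i \<in> {1..n}"
  show "((\<lambda>t. x t i) \<longlongrightarrow> (if i = n then 1 / a n n else 0)) at_top"
  proof (cases "i = n")
    case True
    then show ?thesis using final all_zero by auto
  next
    case False
    then show ?thesis using all_zero i by auto
  qed
qed

end

theorem corollary4p6: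
  fixes n :: nat and b :: "nat \<Rightarrow> real" and a :: "nat \<Rightarrow> nat \<Rightarrow> real"
  assumes n2: "n \<ge> 2"
    and b_pos: "\<forall>i\<in>{1..n}. b i > 0"
    and a_diag: "\<forall>i\<in>{1..n}. a i i > 0"
    and a_nonneg: "\<forall>i\<in>{1..n}. \<forall>j\<in>{1..n}. a i j \<ge> 0"
    and h1: "\<forall>l j. 1 \<le> l \<and> l < j \<and> j \<le> n \<longrightarrow> a j l < a l l"
    and h2: "\<forall>i j. 1 \<le> i \<and> i < j \<and> j \<le> n \<longrightarrow> a (i + 1) j \<le> a i j"
  shows "\<forall>x. LV_solution n b a x \<and> (\<forall>i\<in>{1..n}. x 0 i > 0) \<longrightarrow>
           (\<forall>i\<in>{1..n}. ((\<lambda>t. x t i) \<longlongrightarrow> (if i = n then 1 / a n n else 0)) at_top)"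
proof (intro allI impI)
  fix x assume hx: "LV_solution n b a x \<and> (\<forall>i\<in>{1..n}. x 0 i > 0)"
  interpret LVsys n b a x
    using assms hx by unfold_locales auto
  show "\<forall>i\<in>{1..n}. ((\<lambda>t. x t i) \<longlongrightarrow> (if i = n then 1 / a n n else 0)) at_top"
    by (rule main)
qed

end
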